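(* Let $FAF=\langle\mathcal A,\rho\rangle$ be a fuzzy argumentation framework and $E\subseteq\mathcal A$. For every $C\subseteq\mathcal A$: $E\in\mathcal{PE}(FAF,C)$ if and only if for every $S\in SCCS_{FAF}$, $$E\cap S\in\mathcal{PE}\big(FAF\downarrow_{R_{FAF}(S,E)},\,D_{FAF}(S,E)\cap C\big).$$
   Context: Fuzzy sets: a fuzzy set on a crisp set $X$ is a map $S:X\to[0,1]$; $S\subseteq S'$ means $S(x)\le S'(x)$ for all $x$; $\cap,\cup$ are pointwise $\min,\max$; $\mathrm{Supp}(S)=\{x:S(x)>0\}$. A fuzzy point $(x,a)$, $a\in(0,1]$, has value $a$ at $x$ and $0$ elsewhere; $(x,a)\in S$ means $a\le S(x)$. $a*b=\min\{a,b\}$. A fuzzy argumentation framework (FAF) is $\langle\mathcal A,\rho\rangle$ with $\mathrm{Args}$ a crisp set, $\mathcal A$ a fuzzy set on $\mathrm{Args}$, $\rho:\mathrm{Args}\times\mathrm{Args}\to[0,1]$, $\rho_{AB}=\rho(A,B)$; $A$ attacks $B$ iff $\rho_{AB}>0$. Fuzzy arguments are fuzzy points $(A,a)\in\mathcal A$. An attack of $(A,a)$ on $(B,b)$ is tolerable if $\min\{a,\rho_{AB}\}+b\le1$, sufficient otherwise. $(A,a)$ weakens $(B,b)$ to $(B,b')$, $b'=\min\{1-\min\{a,\rho_{AB}\},b\}$. $T\subseteq\mathcal A$ weakening defends $(C,c)$ if for every fuzzy argument $(B,b)$ sufficiently attacking $(C,c)$ there is $(A',a')\in T$ weakening $(B,b)$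 to some $(B,b')$ which tolerably attacks $(C,c)$. $T$ is conflict-free if no $(A,a),(B,b)\in T$ with $(A,a)$ sufficiently attacking $(B,b)$; admissible if conflict-free and it weakening defends every element of $T$. For $C\subseteq\mathcal A$: $\mathcal{AE}(FAF,C)$ is the set of admissible $E$ with $E\subseteq C$; $\mathcal{PE}(FAF,C)$ (preferred extensions in $C$) is the set of maximal elements of $\mathcal{AE}(FAF,C)$ with respect to $\subseteq$. Path-equivalence on $\mathrm{Args}$: $A\sim B$ iff $A=B$ or there are chains of attacks from $A$ to $B$ and from $B$ to $A$. $SCC_{FAF}(A)$ is the fuzzy set with value $\mathcal A(B)$ at each $B\sim A$, $0$ elsewhere; $SCCS_{FAF}$ is the set of these. $outparents_{FAF}(S)$ is the fuzzy set of $(B,\mathcal A(B))$ with $B\notin\mathrm{Supp}(S)$ attacking some argument of $\mathrm{Supp}(S)$. For $T\subseteq\mathcal A$, $FAF\downarrow_T=\langle T,\rho|_{\mathrm{Supp}(T)\times\mathrm{Supp}(T)}\rangle$, and notions in $FAF\downarrow_T$ refer to its own fuzzy arguments and attacks. For $E\subseteq\mathcal A$, $S\in SCCS_{FAF}$: $L_{FAF}(S,E)(A)=\max_B\big((E\cap outparents_{FAF}(S))(B)*\rho_{BA}\big)$ for $A\in\mathrm{Supp}(S)$, $0$ elsewhere; $R_{FAF}(S,E)(A)=\min\{\mathcal A(A),1-L_{FAF}(S,E)(A)\}$ for $A\in\mathrm{Supp}(S)$, $0$ elsewhere; $D_{FAF}(S,E)$ is the union of fuzzy points $(A,a)\in R_{FAF}(S,E)$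 such that for every $(B,b)\in outparents_{FAF}(S)$ sufficiently attacking $(A,a)$ there is $(C,c)\in E$ weakening $(B,b)$ to some $(B,b')$ which tolerably attacks $(A,a)$. *)

theory Defs
  imports Complex_Main
begin

(* Fuzzy sets on the crisp set of arguments (the type 'a) are maps 'a => real
   with values in [0,1]. *)
type_synonym 'a fset = "'a \<Rightarrow> real"
type_synonym 'a attrel = "'a \<Rightarrow> 'a \<Rightarrow> real"

definition is_fuzzy_set :: "'a fset \<Rightarrow> bool" where
  "is_fuzzy_set S \<longleftrightarrow> (\<forall>x. 0 \<le> S x \<and> S x \<le> 1)"

definition fsubset :: "'a fset \<Rightarrow> 'a fset \<Rightarrow> bool" where
  "fsubset S S' \<longleftrightarrow> (\<forall>x. S x \<le> S' x)"

definition finter :: "'a fset \<Rightarrow> 'a fset \<Rightarrow> 'a fset" where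
  "finter S S' = (\<lambda>x. min (S x) (S' x))"

definition Supp :: "'a fset \<Rightarrow> 'a set" where
  "Supp S = {x. S x > 0}"

definition fpt_in :: "'a \<times> real \<Rightarrow> 'a fset \<Rightarrow> bool" where
  "fpt_in p S \<longleftrightarrow> (0 < snd p \<and> snd p \<le> 1 \<and> snd p \<le> S (fst p))"

definition is_FAF :: "'a fset \<Rightarrow> 'a attrel \<Rightarrow> bool" where
  "is_FAF Ar \<rho> \<longleftrightarrow> is_fuzzy_set Ar \<and> (\<forall>x y. 0 \<le> \<rho> x y \<and> \<rho> x y \<le> 1)"

definition suff_att :: "'a attrel \<Rightarrow> 'a \<times> real \<Rightarrow> 'a \<times> real \<Rightarrow> bool" where
  "suff_att \<rho> p q \<longleftrightarrow> \<rho> (fst p) (fst q) > 0 \<and> min (snd p) (\<rho> (fst p) (fst q)) + snd q > 1"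

definition tol_att :: "'a attrel \<Rightarrow> 'a \<times> real \<Rightarrow> 'a \<times> real \<Rightarrow> bool" where
  "tol_att \<rho> p q \<longleftrightarrow> \<rho> (fst p) (fst q) > 0 \<and> min (snd p) (\<rho> (fst p) (fst q)) + snd q \<le> 1"

definition weaken :: "'a attrel \<Rightarrow> 'a \<times> real \<Rightarrow> 'a \<times> real \<Rightarrow> 'a \<times> real" where
  "weaken \<rho> p q = (fst q, min (1 - min (snd p) (\<rho> (fst p) (fst q))) (snd q))"

definition wdefends :: "'a fset \<Rightarrow> 'a attrel \<Rightarrow> 'a fset \<Rightarrow> 'a \<times> real \<Rightarrow> bool" where
  "wdefends Ar \<rho> T c \<longleftrightarrow>
     (\<forall>b. fpt_in b Ar \<and> suff_att \<rho> b c \<longrightarrow>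
        (\<exists>a'. fpt_in a' T \<and> tol_att \<rho> (weaken \<rho> a' b) c))"

definition conflict_free :: "'a attrel \<Rightarrow> 'a fset \<Rightarrow> bool" where
  "conflict_free \<rho> T \<longleftrightarrow> \<not> (\<exists>p q. fpt_in p T \<and> fpt_in q T \<and> suff_att \<rho> p q)"

definition admissible :: "'a fset \<Rightarrow> 'a attrel \<Rightarrow> 'a fset \<Rightarrow> bool" where
  "admissible Ar \<rho> T \<longleftrightarrow> is_fuzzy_set T \<and> fsubset T Ar \<and> conflict_free \<rho> T \<and>
     (\<forall>c. fpt_in c T \<longrightarrow> wdefends Ar \<rho> T c)"

definition AE :: "'a fset \<Rightarrow> 'a attrel \<Rightarrow> 'a fset \<Rightarrow> 'a fset set" where
  "AE Ar \<rho> C = {E. admissible Ar \<rho> E \<and> fsubset E C}"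

definition PE :: "'a fset \<Rightarrow> 'a attrel \<Rightarrow> 'a fset \<Rightarrow> 'a fset set" where
  "PE Ar \<rho> C = {E \<in> AE Ar \<rho> C. \<forall>E' \<in> AE Ar \<rho> C. fsubset E E' \<longrightarrow> E' = E}"

definition att_rel :: "'a attrel \<Rightarrow> ('a \<times> 'a) set" where
  "att_rel \<rho> = {(x, y). \<rho> x y > 0}"

definition path_equiv :: "'a attrel \<Rightarrow> 'a \<Rightarrow> 'a \<Rightarrow> bool" where
  "path_equiv \<rho> A B \<longleftrightarrow> A = B \<or> ((A, B) \<in> (att_rel \<rho>)\<^sup>+ \<and> (B, A) \<in> (att_rel \<rho>)\<^sup>+)"

definition SCC :: "'a fset \<Rightarrow> 'a attrel \<Rightarrow> 'a \<Rightarrow> 'a fset" where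
  "SCC Ar \<rho> A = (\<lambda>B. if path_equiv \<rho> B A then Ar B else 0)"

definition SCCS :: "'a fset \<Rightarrow> 'a attrel \<Rightarrow> 'a fset set" where
  "SCCS Ar \<rho> = range (SCC Ar \<rho>)"

definition outparents :: "'a fset \<Rightarrow> 'a attrel \<Rightarrow> 'a fset \<Rightarrow> 'a fset" where
  "outparents Ar \<rho> S =
     (\<lambda>B. if B \<notin> Supp S \<and> (\<exists>A \<in> Supp S. \<rho> B A > 0) then Ar B else 0)"

definition restr :: "'a attrel \<Rightarrow> 'a fset \<Rightarrow> 'a attrel" where
  "restr \<rho> T = (\<lambda>x y. if x \<in> Supp T \<and> y \<in> Supp T then \<rho> x y else 0)"

(* L, R, D; the arguments are assumed finite, so the maximum exists *)
definition Lf :: "'a fset \<Rightarrow> 'a attrel \<Rightarrow> 'a fset \<Rightarrow> 'a fset \<Rightarrow> 'a fset" where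
  "Lf Ar \<rho> S E = (\<lambda>A. if A \<in> Supp S
      then Max (range (\<lambda>B. min (finter E (outparents Ar \<rho> S) B) (\<rho> B A))) else 0)"

definition Rf :: "'a fset \<Rightarrow> 'a attrel \<Rightarrow> 'a fset \<Rightarrow> 'a fset \<Rightarrow> 'a fset" where
  "Rf Ar \<rho> S E = (\<lambda>A. if A \<in> Supp S then min (Ar A) (1 - Lf Ar \<rho> S E A) else 0)"

definition D_good :: "'a fset \<Rightarrow> 'a attrel \<Rightarrow> 'a fset \<Rightarrow> 'a fset \<Rightarrow> 'a \<times> real \<Rightarrow> bool" where
  "D_good Ar \<rho> S E p \<longleftrightarrow> fpt_in p (Rf Ar \<rho> S E) \<and>
     (\<forall>b. fpt_in b (outparents Ar \<rho> S) \<and> suff_att \<rho> b p \<longrightarrow>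
        (\<exists>c. fpt_in c E \<and> tol_att \<rho> (weaken \<rho> c b) p))"

(* union of the fuzzy points satisfying D_good (pointwise supremum; 0 if none) *)
definition Df :: "'a fset \<Rightarrow> 'a attrel \<Rightarrow> 'a fset \<Rightarrow> 'a fset \<Rightarrow> 'a fset" where
  "Df Ar \<rho> S E = (\<lambda>A. if {a. D_good Ar \<rho> S E (A, a)} = {} then 0
                        else Sup {a. D_good Ar \<rho> S E (A, a)})"

end

theory Submission
  imports Defs
begin


locale faf =
  fixes Ar :: "'a fset" and \<rho> :: "'a attrel"
  assumes fin: "finite (UNIV :: 'a set)"
    and faf: "is_FAF Ar \<rho>"
begin

abbreviation "SC X \<equiv> SCC Ar \<rho> X"
abbreviation "OP X \<equiv> outparents Ar \<rho> (SC X)"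
abbreviation "LL X E \<equiv> Lf Ar \<rho> (SC X) E"
abbreviation "RR X E \<equiv> Rf Ar \<rho> (SC X) E"
abbreviation "DF X E \<equiv> Df Ar \<rho> (SC X) E"
abbreviation "DG X E \<equiv> D_good Ar \<rho> (SC X) E"

lemma Ar0: "0 \<le> Ar x" and Ar1: "Ar x \<le> 1" using faf by (auto simp: is_FAF_def is_fuzzy_set_def)
lemma rho0: "0 \<le> \<rho> x y" and rho1: "\<rho> x y \<le> 1" using faf by (auto simp: is_FAF_def)

lemma pe_refl: "path_equiv \<rho> x x" by (simp add: path_equiv_def)
lemma pe_sym: "path_equiv \<rho> x y \<Longrightarrow> path_equiv \<rho> y x" by (auto simp: path_equiv_def)
lemma pe_trans: "path_equiv \<rho> x y \<Longrightarrow> path_equiv \<rho> y z \<Longrightarrow> path_equiv \<rho> x z"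
  unfolding path_equiv_def by (auto intro: trancl_trans)

lemma Supp_SC: "Supp (SC X) = {B. path_equiv \<rho> B X \<and> Ar B > 0}"
  by (auto simp: Supp_def SCC_def)
lemma SC_in: "B \<in> Supp (SC X) \<Longrightarrow> SC X B = Ar B"
  by (auto simp: Supp_def SCC_def)
lemma SC_out: "B \<notin> Supp (SC X) \<Longrightarrow> SC X B = 0"
  using Ar0[of B] by (auto simp: Supp_def SCC_def)
lemma SC_fuzzy: "is_fuzzy_set (SC X)"
  using Ar0 Ar1 by (auto simp: is_fuzzy_set_def SCC_def)

lemma finter_SC:
  assumes "is_fuzzy_set E" "fsubset E Ar"
  shows "finter E (SC X) B = (if B \<in> Supp (SC X) then E B else 0)"
  using assms SC_in[of B X] SC_out[of B X]
  by (auto simp: finter_def is_fuzzy_set_def fsubset_def min_def intro: antisym)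

lemma outp_cases: "outparents Ar \<rho> S B = Ar B \<or> outparents Ar \<rho> S B = 0"
  by (auto simp: outparents_def)
lemma outp_val: "B \<notin> Supp S \<Longrightarrow> A \<in> Supp S \<Longrightarrow> \<rho> B A > 0 \<Longrightarrow> outparents Ar \<rho> S B = Ar B"
  by (auto simp: outparents_def)
lemma outp_pos: "outparents Ar \<rho> S B > 0 \<Longrightarrow> B \<notin> Supp S"
  by (auto simp: outparents_def split: if_splits)
lemma outp_nonneg: "0 \<le> outparents Ar \<rho> S B"
  using Ar0 by (auto simp: outparents_def)
lemma outp_le: "outparents Ar \<rho> S B \<le> Ar B"
  using Ar0 by (auto simp: outparents_def)

lemma finite_range: "finite (range (f :: 'a \<Rightarrow> 'b))"
  using fin by simp

lemma Lf_ge: "A \<in> Supp S \<Longrightarrow> min (finter E (outparents Ar \<rho> S) B) (\<rho> B A) \<le> Lf Ar \<rho> S E A"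
  unfolding Lf_def by (auto intro!: Max_ge finite_range)

lemma Lf_ex: "A \<in> Supp S \<Longrightarrow> \<exists>B. Lf Ar \<rho> S E A = min (finter E (outparents Ar \<rho> S) B) (\<rho> B A)"
proof -
  assume "A \<in> Supp S"
  then have "Lf Ar \<rho> S E A \<in> range (\<lambda>B. min (finter E (outparents Ar \<rho> S) B) (\<rho> B A))"
    unfolding Lf_def by (auto intro!: Max_in finite_range)
  then show ?thesis by auto
qed

lemma Lf_le1: "Lf Ar \<rho> S E A \<le> 1"
proof (cases "A \<in> Supp S")
  case True
  then obtain B where "Lf Ar \<rho> S E A = min (finter E (outparents Ar \<rho> S) B) (\<rho> B A)"
    using Lf_ex by blast
  then show ?thesis using rho1[of B A] by linarith
qed (simp add: Lf_def)

lemma Lf_nonneg: "is_fuzzy_set E \<Longrightarrow> 0 \<le> Lf Ar \<rho> S E A"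
proof (cases "A \<in> Supp S")
  case True
  assume "is_fuzzy_set E"
  then have "0 \<le> min (finter E (outparents Ar \<rho> S) A) (\<rho> A A)"
    using outp_nonneg[of S A] rho0[of A A] by (auto simp: is_fuzzy_set_def finter_def)
  then show ?thesis using Lf_ge[OF True] by (meson order_trans)
qed (simp add: Lf_def)

lemma Rf_in: "A \<in> Supp S \<Longrightarrow> Rf Ar \<rho> S E A = min (Ar A) (1 - Lf Ar \<rho> S E A)"
  by (simp add: Rf_def)
lemma Rf_out: "A \<notin> Supp S \<Longrightarrow> Rf Ar \<rho> S E A = 0"
  by (simp add: Rf_def)
lemma Rf_nonneg: "0 \<le> Rf Ar \<rho> S E A"
  using Lf_le1[of S E A] Ar0[of A] by (simp add: Rf_def)
lemma Rf_le: "Rf Ar \<rho> S E A \<le> Ar A"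
  using Ar0[of A] by (simp add: Rf_def)
lemma Rf_pos: "Rf Ar \<rho> S E A > 0 \<Longrightarrow> A \<in> Supp S"
  by (auto simp: Rf_def split: if_splits)
lemma Rf_fuzzy: "is_fuzzy_set (Rf Ar \<rho> S E)"
  using Rf_nonneg Rf_le Ar1 unfolding is_fuzzy_set_def by (meson order_trans)

end

context faf begin

lemma no_out_suff:
  assumes EA: "fsubset E Ar" and x: "fpt_in (X,xv) E" and XS: "X \<notin> Supp S"
    and y: "fpt_in (Y,yv) (Rf Ar \<rho> S E)"
  shows "\<not> suff_att \<rho> (X,xv) (Y,yv)"
proof
  assume sa: "suff_att \<rho> (X,xv) (Y,yv)"
  have YS: "Y \<in> Supp S" using y Rf_pos[of S E Y] by (auto simp: fpt_in_def)
  have xv: "0 < xv" "xv \<le> E X" using x by (auto simp: fpt_in_def)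
  have EX: "E X \<le> Ar X" using EA by (auto simp: fsubset_def)
  have rp: "\<rho> X Y > 0" using sa by (simp add: suff_att_def)
  have op: "outparents Ar \<rho> S X = Ar X" using outp_val[OF XS YS rp] .
  have fe: "finter E (outparents Ar \<rho> S) X = E X" using op EX by (simp add: finter_def)
  have "min (E X) (\<rho> X Y) \<le> Lf Ar \<rho> S E Y" using Lf_ge[OF YS, of E X] fe by simp
  moreover have "yv \<le> 1 - Lf Ar \<rho> S E Y" using y Rf_in[OF YS, of E] by (auto simp: fpt_in_def)
  moreover have "min xv (\<rho> X Y) + yv > 1" using sa by (simp add: suff_att_def)
  moreover have "min xv (\<rho> X Y) \<le> min (E X) (\<rho> X Y)" using xv by (simp add: min.coboundedI1)
  ultimately show False by linarith
qed

lemma E_le_R: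
  assumes fE: "is_fuzzy_set E" and EA: "fsubset E Ar" and cf: "conflict_free \<rho> E"
  shows "fsubset (finter E (SC X)) (RR X E)"
unfolding fsubset_def proof
  fix A
  show "finter E (SC X) A \<le> RR X E A"
  proof (cases "A \<in> Supp (SC X)")
    case False then show ?thesis using finter_SC[OF fE EA] Rf_out by simp
  next
    case True
    have eq: "finter E (SC X) A = E A" using finter_SC[OF fE EA] True by simp
    have EAr: "E A \<le> Ar A" using EA by (simp add: fsubset_def)
    have "E A \<le> 1 - LL X E A"
    proof (rule ccontr)
      assume nle: "\<not> E A \<le> 1 - LL X E A"
      obtain B where LB: "LL X E A = min (finter E (OP X) B) (\<rho> B A)" using Lf_ex[OF True] by blast
      have E1: "E A \<le> 1" "0 \<le> E B" "E B \<le> 1" using fE by (auto simp: is_fuzzy_set_def)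
      have pos: "LL X E A > 0" using nle E1 by linarith
      then have fp: "finter E (OP X) B > 0" and rp: "\<rho> B A > 0" using LB by auto
      then have "OP X B > 0" by (simp add: finter_def)
      then have "OP X B = Ar B" using outp_cases by (metis less_irrefl)
      then have fe: "finter E (OP X) B = E B" using EA by (simp add: finter_def fsubset_def min_def)
      have EB: "E B > 0" using fp fe by simp
      have EApos: "E A > 0" using nle Lf_le1[of "SC X" E A] by linarith
      have "fpt_in (B, E B) E" "fpt_in (A, E A) E" using EB EApos E1 by (auto simp: fpt_in_def)
      moreover have "suff_att \<rho> (B, E B) (A, E A)"
        using rp nle LB fe by (auto simp: suff_att_def)
      ultimately show False using cf unfolding conflict_free_def by blast
    qed
    then show ?thesis using eq EAr Rf_in[OF True] by simp
  qed
qed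

lemma good_le_Df: assumes "D_good Ar \<rho> S E (A,a)" shows "a \<le> Df Ar \<rho> S E A"
proof -
  let ?G = "{a. D_good Ar \<rho> S E (A,a)}"
  have ne: "?G \<noteq> {}" using assms by blast
  have bdd: "bdd_above ?G" by (rule bdd_aboveI[of _ 1]) (auto simp: D_good_def fpt_in_def)
  have "a \<le> Sup ?G" using assms bdd by (auto intro: cSup_upper)
  moreover have "Df Ar \<rho> S E A = Sup ?G" unfolding Df_def using ne by (subst if_not_P) auto
  ultimately show ?thesis by simp
qed

lemma good_down: assumes g: "D_good Ar \<rho> S E (A,g)" and a: "0 < a" "a \<le> g"
  shows "D_good Ar \<rho> S E (A,a)"
  unfolding D_good_def
proof (intro conjI allI impI)
  show "fpt_in (A,a) (Rf Ar \<rho> S E)" using g a by (auto simp: D_good_def fpt_in_def)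
  fix b assume b: "fpt_in b (outparents Ar \<rho> S) \<and> suff_att \<rho> b (A,a)"
  then have "suff_att \<rho> b (A,g)" using a by (auto simp: suff_att_def)
  moreover have "\<forall>b. fpt_in b (outparents Ar \<rho> S) \<and> suff_att \<rho> b (A,g) \<longrightarrow>
        (\<exists>c. fpt_in c E \<and> tol_att \<rho> (weaken \<rho> c b) (A,g))" using g unfolding D_good_def by blast
  ultimately obtain c where "fpt_in c E" "tol_att \<rho> (weaken \<rho> c b) (A,g)" using b by blast
  then show "\<exists>c. fpt_in c E \<and> tol_att \<rho> (weaken \<rho> c b) (A,a)"
    using a by (intro exI[of _ c]) (auto simp: tol_att_def weaken_def)
qed

lemma good_lim:
  assumes fE: "is_fuzzy_set E" and a: "0 < a"
    and all: "\<forall>a'. 0 < a' \<and> a' < a \<longrightarrow> D_good Ar \<rho> S E (A,a')"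
  shows "D_good Ar \<rho> S E (A,a)"
  unfolding D_good_def
proof (intro conjI allI impI)
  have "a \<le> Rf Ar \<rho> S E A"
    by (rule dense_le_bounded[OF a]) (use all in \<open>auto simp: D_good_def fpt_in_def\<close>)
  moreover have "a \<le> 1"
    by (rule dense_le_bounded[OF a]) (use all in \<open>auto simp: D_good_def fpt_in_def\<close>)
  ultimately show "fpt_in (A,a) (Rf Ar \<rho> S E)" using a by (simp add: fpt_in_def)
  fix b assume b: "fpt_in b (outparents Ar \<rho> S) \<and> suff_att \<rho> b (A,a)"
  obtain B bv where bB: "b = (B,bv)" by (cases b)
  have sa: "\<rho> B A > 0" "min bv (\<rho> B A) + a > 1" using b bB by (auto simp: suff_att_def)
  show "\<exists>c. fpt_in c E \<and> tol_att \<rho> (weaken \<rho> c b) (A,a)"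
  proof (rule ccontr)
    assume none: "\<not> (\<exists>c. fpt_in c E \<and> tol_att \<rho> (weaken \<rho> c b) (A,a))"
    define g where "g C = min (min (1 - min (E C) (\<rho> C B)) bv) (\<rho> B A)" for C
    define K where "K = insert (min bv (\<rho> B A)) (g ` {C. E C > 0})"
    have finK: "finite K" unfolding K_def using fin by (metis finite_imageI finite_insert finite_subset subset_UNIV)
    have Kgt: "\<forall>k\<in>K. k + a > 1"
    proof
      fix k assume "k \<in> K"
      then consider "k = min bv (\<rho> B A)" | C where "E C > 0" "k = g C" unfolding K_def by blast
      then show "k + a > 1"
      proof cases
        case 1 then show ?thesis using sa by simp
      next
        case 2
        have "fpt_in (C, E C) E" using 2 fE by (auto simp: fpt_in_def is_fuzzy_set_def)
        then have "\<not> tol_att \<rho> (weaken \<rho> (C, E C) b) (A,a)" using none by blast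
        then show ?thesis using 2 sa bB by (auto simp: tol_att_def weaken_def g_def)
      qed
    qed
    define m where "m = Min K"
    have mK: "m \<in> K" unfolding m_def using finK by (intro Min_in) (auto simp: K_def)
    have mle: "\<forall>k\<in>K. m \<le> k" unfolding m_def using finK by auto
    have ma: "m + a > 1" using mK Kgt by blast
    define a' where "a' = max ((1 - m + a)/2) (a/2)"
    have a'1: "0 < a'" "a' < a" using a ma unfolding a'_def by auto
    have a'2: "m + a' > 1"
    proof -
      have "(1 - m + a)/2 \<le> a'" unfolding a'_def by simp
      moreover have "m + (1 - m + a)/2 = (1 + m + a)/2" by (simp add: field_simps)
      moreover have "(1 + m + a)/2 > 1" using ma by (simp add: field_simps)
      ultimately show ?thesis by linarith
    qed
    have "D_good Ar \<rho> S E (A,a')" using all a'1 by blast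
    moreover have "suff_att \<rho> b (A,a')"
      using sa mle a'2 bB by (auto simp: suff_att_def K_def)
    ultimately have "\<exists>c. fpt_in c E \<and> tol_att \<rho> (weaken \<rho> c b) (A,a')"
      using b unfolding D_good_def by blast
    then obtain c where c: "fpt_in c E" "tol_att \<rho> (weaken \<rho> c b) (A,a')" by blast
    obtain C cv where cC: "c = (C,cv)" by (cases c)
    have cv: "0 < cv" "cv \<le> E C" using c cC by (auto simp: fpt_in_def)
    have "g C \<in> K" using cv unfolding K_def by auto
    then have "m \<le> g C" using mle by blast
    moreover have "g C \<le> min (min (1 - min cv (\<rho> C B)) bv) (\<rho> B A)"
      unfolding g_def using cv by (auto simp: min_def)
    moreover have "min (min (1 - min cv (\<rho> C B)) bv) (\<rho> B A) + a' \<le> 1"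
      using c cC bB by (auto simp: tol_att_def weaken_def)
    ultimately show False using a'2 by linarith
  qed
qed

lemma Df_good:
  assumes fE: "is_fuzzy_set E" and a: "0 < a" "a \<le> Df Ar \<rho> S E A"
  shows "D_good Ar \<rho> S E (A,a)"
proof -
  let ?G = "{a. D_good Ar \<rho> S E (A,a)}"
  have ne: "?G \<noteq> {}" using a by (auto simp: Df_def split: if_splits)
  have bdd: "bdd_above ?G" by (rule bdd_aboveI[of _ 1]) (auto simp: D_good_def fpt_in_def)
  have "Df Ar \<rho> S E A = Sup ?G" unfolding Df_def using ne by (subst if_not_P) auto
  then have aS: "a \<le> Sup ?G" using a by simp
  have "\<forall>a'. 0 < a' \<and> a' < a \<longrightarrow> D_good Ar \<rho> S E (A,a')"
  proof (intro allI impI)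
    fix a' assume a': "0 < a' \<and> a' < a"
    then have "a' < Sup ?G" using aS by linarith
    then obtain g where "g \<in> ?G" "a' < g" using less_cSup_iff[OF ne bdd] by blast
    then show "D_good Ar \<rho> S E (A,a')" using good_down a' by auto
  qed
  then show ?thesis using good_lim[OF fE a(1)] by blast
qed

end

context faf begin

lemma comp_defends:
  assumes fE: "is_fuzzy_set E" and EA: "fsubset E Ar"
    and Tadm: "admissible (RR X E) (restr \<rho> (RR X E)) T"
    and TD: "fsubset T (DF X E)"
    and EF: "fsubset E F" and TF: "fsubset T F"
    and c: "fpt_in (A,a) T" and b: "fpt_in (B,bv) Ar" and sa: "suff_att \<rho> (B,bv) (A,a)"
  shows "\<exists>a'. fpt_in a' F \<and> tol_att \<rho> (weaken \<rho> a' (B,bv)) (A,a)"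
proof -
  have TR: "fsubset T (RR X E)" using Tadm by (simp add: admissible_def)
  have a: "0 < a" "a \<le> 1" "a \<le> T A" using c by (auto simp: fpt_in_def)
  have aR: "a \<le> RR X E A" using TR a by (auto simp: fsubset_def intro: order_trans)
  have AS: "A \<in> Supp (SC X)" using aR a Rf_pos[of "SC X" E A] by linarith
  have ASR: "A \<in> Supp (RR X E)" using aR a by (simp add: Supp_def)
  have b1: "0 < bv" "bv \<le> 1" "bv \<le> Ar B" using b by (auto simp: fpt_in_def)
  have rBA: "\<rho> B A > 0" "min bv (\<rho> B A) + a > 1" using sa by (auto simp: suff_att_def)
  have restr_eq: "\<And>x y. x \<in> Supp (RR X E) \<Longrightarrow> y \<in> Supp (RR X E) \<Longrightarrow> restr \<rho> (RR X E) x y = \<rho> x y"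
    by (simp add: restr_def)
  have TSupp: "\<And>x v. fpt_in (x,v) T \<Longrightarrow> x \<in> Supp (RR X E)"
  proof -
    fix x v assume "fpt_in (x,v) T"
    then have "0 < v" "v \<le> T x" by (auto simp: fpt_in_def)
    moreover have "T x \<le> RR X E x" using TR by (simp add: fsubset_def)
    ultimately show "x \<in> Supp (RR X E)" by (simp add: Supp_def)
  qed
  have Tdef: "wdefends (RR X E) (restr \<rho> (RR X E)) T (A,a)" using Tadm c by (auto simp: admissible_def)
  have fE_F: "\<And>p. fpt_in p E \<Longrightarrow> fpt_in p F" using EF by (auto simp: fpt_in_def fsubset_def intro: order_trans)
  have fT_F: "\<And>p. fpt_in p T \<Longrightarrow> fpt_in p F" using TF by (auto simp: fpt_in_def fsubset_def intro: order_trans)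
  show ?thesis
  proof (cases "B \<in> Supp (SC X)")
    case False
    have "OP X B = Ar B" using outp_val[OF False AS rBA(1)] .
    then have bO: "fpt_in (B,bv) (OP X)" using b by (simp add: fpt_in_def)
    have "T A \<le> DF X E A" using TD by (simp add: fsubset_def)
    then have "a \<le> DF X E A" using a by linarith
    then have "DG X E (A,a)" using Df_good[OF fE a(1)] by blast
    then have "\<exists>c. fpt_in c E \<and> tol_att \<rho> (weaken \<rho> c (B,bv)) (A,a)"
      using bO sa unfolding D_good_def by blast
    then show ?thesis using fE_F by blast
  next
    case True
    define r where "r = RR X E B"
    have r: "r = min (Ar B) (1 - LL X E B)" using Rf_in[OF True] r_def by simp
    have r1: "r \<le> 1" using r Ar1[of B] by linarith
    show ?thesis
    proof (cases "bv \<le> r")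
      case True
      have bR: "fpt_in (B,bv) (RR X E)" using b1 True r_def by (simp add: fpt_in_def)
      have BSR: "B \<in> Supp (RR X E)" using b1 True r_def by (simp add: Supp_def)
      have "suff_att (restr \<rho> (RR X E)) (B,bv) (A,a)" using sa restr_eq[OF BSR ASR] by (simp add: suff_att_def)
      then obtain a' where a': "fpt_in a' T"
          "tol_att (restr \<rho> (RR X E)) (weaken (restr \<rho> (RR X E)) a' (B,bv)) (A,a)"
        using Tdef bR unfolding wdefends_def by blast
      obtain A' av where aA: "a' = (A',av)" by (cases a')
      have "A' \<in> Supp (RR X E)" using TSupp a' aA by blast
      then have "tol_att \<rho> (weaken \<rho> a' (B,bv)) (A,a)"
        using a'(2) aA restr_eq[OF _ BSR] restr_eq[OF BSR ASR] by (simp add: tol_att_def weaken_def)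
      then show ?thesis using a' fT_F by blast
    next
      case False
      show ?thesis
      proof (cases "r > 0 \<and> min r (\<rho> B A) + a > 1")
        case True
        have bR: "fpt_in (B,r) (RR X E)" using True r1 r_def by (simp add: fpt_in_def)
        have BSR: "B \<in> Supp (RR X E)" using True r_def by (simp add: Supp_def)
        have "suff_att (restr \<rho> (RR X E)) (B,r) (A,a)" using True rBA restr_eq[OF BSR ASR] by (simp add: suff_att_def)
        then obtain a' where a': "fpt_in a' T"
            "tol_att (restr \<rho> (RR X E)) (weaken (restr \<rho> (RR X E)) a' (B,r)) (A,a)"
          using Tdef bR unfolding wdefends_def by blast
        obtain A' av where aA: "a' = (A',av)" by (cases a')
        have "A' \<in> Supp (RR X E)" using TSupp a' aA by blast
        then have t: "min (min (1 - min av (\<rho> A' B)) r) (\<rho> B A) + a \<le> 1"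
          using a'(2) aA restr_eq[OF _ BSR] restr_eq[OF BSR ASR] by (simp add: tol_att_def weaken_def)
        have "1 - min av (\<rho> A' B) + a \<le> 1" using t True by (auto simp: min_def split: if_splits)
        then have "min (min (1 - min av (\<rho> A' B)) bv) (\<rho> B A) + a \<le> 1" by linarith
        then have "tol_att \<rho> (weaken \<rho> a' (B,bv)) (A,a)" using aA rBA
          by (simp only: tol_att_def weaken_def fst_conv snd_conv)
        then show ?thesis using a' fT_F by blast
      next
        case False
        have nb: "r < bv" using \<open>\<not> bv \<le> r\<close> by simp
        have rL: "r = 1 - LL X E B" using r b1 nb by (auto simp: min_def split: if_splits)
        have La: "LL X E B \<ge> a"
        proof (cases "r \<le> 0")
          case True then show ?thesis using rL a by linarith
        next
          case False
          then have "min r (\<rho> B A) + a \<le> 1" using \<open>\<not> (r > 0 \<and> min r (\<rho> B A) + a > 1)\<close> by simp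
          then have "r + a \<le> 1" using rBA nb by (auto simp: min_def split: if_splits)
          then show ?thesis using rL by linarith
        qed
        obtain B' where LB: "LL X E B = min (finter E (OP X) B') (\<rho> B' B)" using Lf_ex[OF True] by blast
        have fp: "finter E (OP X) B' > 0" and rp: "\<rho> B' B > 0" using LB La a by auto
        then have "OP X B' > 0" by (simp add: finter_def)
        then have "OP X B' = Ar B'" using outp_cases by (metis less_irrefl)
        then have fe: "finter E (OP X) B' = E B'" using EA by (simp add: finter_def fsubset_def min_def)
        have cE: "fpt_in (B', E B') E" using fp fe fE by (auto simp: fpt_in_def is_fuzzy_set_def)
        have "min (min (1 - min (E B') (\<rho> B' B)) bv) (\<rho> B A) + a \<le> 1"
          using LB fe La by linarith
        then have "tol_att \<rho> (weaken \<rho> (B', E B') (B,bv)) (A,a)" using rBA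
          by (simp only: tol_att_def weaken_def fst_conv snd_conv)
        then show ?thesis using cE fE_F by blast
      qed
    qed
  qed
qed

end

context faf begin

lemma Df_nonneg: "0 \<le> Df Ar \<rho> S E A"
proof (cases "{a. D_good Ar \<rho> S E (A,a)} = {}")
  case True then show ?thesis by (simp add: Df_def)
next
  case False
  then obtain g where g: "D_good Ar \<rho> S E (A,g)" by blast
  then have "0 < g" by (simp add: D_good_def fpt_in_def)
  moreover have "g \<le> Df Ar \<rho> S E A" using good_le_Df[OF g] .
  ultimately show ?thesis by linarith
qed

lemma T_le_E:
  assumes fE: "is_fuzzy_set E" and EA: "fsubset E Ar"
  shows "fsubset (finter E (SC X)) E"
  using finter_SC[OF fE EA] fE by (auto simp: fsubset_def is_fuzzy_set_def)

lemma T_nonneg: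
  assumes fE: "is_fuzzy_set E" and EA: "fsubset E Ar"
  shows "0 \<le> finter E (SC X) x"
  using finter_SC[OF fE EA] fE by (auto simp: is_fuzzy_set_def)

lemma fpt_T:
  assumes fE: "is_fuzzy_set E" and EA: "fsubset E Ar" and p: "fpt_in (x,v) (finter E (SC X))"
  shows "x \<in> Supp (SC X) \<and> fpt_in (x,v) E"
proof -
  have "0 < v" "v \<le> finter E (SC X) x" "v \<le> 1" using p by (auto simp: fpt_in_def)
  then show ?thesis using finter_SC[OF fE EA, of X x] by (auto simp: fpt_in_def split: if_splits)
qed

lemma fpt_T_in:
  assumes fE: "is_fuzzy_set E" and EA: "fsubset E Ar" and p: "fpt_in (x,v) E" and xS: "x \<in> Supp (SC X)"
  shows "fpt_in (x,v) (finter E (SC X))"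
  using p xS finter_SC[OF fE EA, of X x] by (auto simp: fpt_in_def)

lemma fpt_R_Supp: "fpt_in (x,v) (Rf Ar \<rho> S E) \<Longrightarrow> x \<in> Supp (Rf Ar \<rho> S E)"
  by (auto simp: fpt_in_def Supp_def)

lemma fpt_sub: "fpt_in p T \<Longrightarrow> fsubset T F \<Longrightarrow> fpt_in p F"
  by (auto simp: fpt_in_def fsubset_def intro: order_trans)

lemma adm_comp:
  assumes fE: "is_fuzzy_set E" and EA: "fsubset E Ar" and adm: "admissible Ar \<rho> E" and EC: "fsubset E C"
  shows "finter E (SC X) \<in> AE (RR X E) (restr \<rho> (RR X E)) (finter (DF X E) C)"
proof -
  let ?T = "finter E (SC X)"
  let ?R = "RR X E"
  let ?r = "restr \<rho> (RR X E)"
  have cf: "conflict_free \<rho> E" using adm by (simp add: admissible_def)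
  have TR: "fsubset ?T ?R" by (rule E_le_R[OF fE EA cf])
  have Tval: "\<And>x. ?T x = (if x \<in> Supp (SC X) then E x else 0)" using finter_SC[OF fE EA] .
  have Tfz: "is_fuzzy_set ?T" using fE by (auto simp: Tval is_fuzzy_set_def)
  have TSR: "\<And>x v. fpt_in (x,v) ?T \<Longrightarrow> x \<in> Supp ?R"
    using TR fpt_R_Supp fpt_sub by blast
  have restr_eq: "\<And>x y. x \<in> Supp ?R \<Longrightarrow> y \<in> Supp ?R \<Longrightarrow> ?r x y = \<rho> x y"
    by (simp add: restr_def)
  have cfT: "conflict_free ?r ?T"
    unfolding conflict_free_def
  proof
    assume "\<exists>p q. fpt_in p ?T \<and> fpt_in q ?T \<and> suff_att ?r p q"
    then obtain P pv Q qv where pq: "fpt_in (P,pv) ?T" "fpt_in (Q,qv) ?T" "suff_att ?r (P,pv) (Q,qv)"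
      by auto
    then have "suff_att \<rho> (P,pv) (Q,qv)" using restr_eq[OF TSR TSR] by (simp add: suff_att_def)
    moreover have "fpt_in (P,pv) E" "fpt_in (Q,qv) E" using pq fpt_T[OF fE EA] by blast+
    ultimately show False using cf unfolding conflict_free_def by blast
  qed
  have defT: "\<forall>c. fpt_in c ?T \<longrightarrow> wdefends ?R ?r ?T c"
  proof (intro allI impI)
    fix c assume c: "fpt_in c ?T"
    obtain A a where cA: "c = (A,a)" by (cases c)
    have ASR: "A \<in> Supp ?R" using TSR c cA by blast
    have cE: "fpt_in (A,a) E" using c cA fpt_T[OF fE EA] by blast
    have ca: "0 < a" using cE by (simp add: fpt_in_def)
    show "wdefends ?R ?r ?T c" unfolding wdefends_def
    proof (intro allI impI)
      fix b assume b: "fpt_in b ?R \<and> suff_att ?r b c"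
      obtain B bv where bB: "b = (B,bv)" by (cases b)
      have bR: "fpt_in (B,bv) ?R" using b bB by simp
      have BSR: "B \<in> Supp ?R" using fpt_R_Supp bR by blast
      have sa: "suff_att \<rho> (B,bv) (A,a)" using b bB cA restr_eq[OF BSR ASR] by (simp add: suff_att_def)
      have bAr: "fpt_in (B,bv) Ar" using bR Rf_le[of "SC X" E] by (auto simp: fpt_in_def intro: order_trans)
      have "wdefends Ar \<rho> E (A,a)" using adm cE by (simp add: admissible_def)
      then obtain a' where a': "fpt_in a' E" "tol_att \<rho> (weaken \<rho> a' (B,bv)) (A,a)"
        using bAr sa unfolding wdefends_def by blast
      obtain A' av where aA: "a' = (A',av)" by (cases a')
      show "\<exists>a'. fpt_in a' ?T \<and> tol_att ?r (weaken ?r a' b) c"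
      proof (cases "A' \<in> Supp (SC X)")
        case True
        have aT: "fpt_in (A',av) ?T" using fpt_T_in[OF fE EA _ True] a' aA by blast
        have "A' \<in> Supp ?R" using TSR aT by blast
        then have "tol_att ?r (weaken ?r a' b) c"
          using a'(2) aA bB cA restr_eq[OF _ BSR] restr_eq[OF BSR ASR] by (simp add: tol_att_def weaken_def)
        then show ?thesis using aT aA by blast
      next
        case False
        have ns: "\<not> suff_att \<rho> (A',av) (B,bv)" using no_out_suff[OF EA _ False bR] a' aA by blast
        have t: "min (min (1 - min av (\<rho> A' B)) bv) (\<rho> B A) + a \<le> 1"
          using a'(2) aA by (simp add: tol_att_def weaken_def)
        have s: "min bv (\<rho> B A) + a > 1" using sa by (simp add: suff_att_def)
        have "1 - min av (\<rho> A' B) + a \<le> 1" using t s by (auto simp: min_def split: if_splits)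
        then have "min av (\<rho> A' B) + bv > 1" "\<rho> A' B > 0" using s ca by (auto simp: min_def split: if_splits)
        then have "suff_att \<rho> (A',av) (B,bv)" by (simp add: suff_att_def)
        then show ?thesis using ns by blast
      qed
    qed
  qed
  have TDC: "fsubset ?T (finter (DF X E) C)"
    unfolding fsubset_def finter_def[of "DF X E"]
  proof
    fix x
    have "?T x \<le> E x" using T_le_E[OF fE EA] by (simp add: fsubset_def)
    then have TC: "?T x \<le> C x" using EC by (auto simp: fsubset_def intro: order_trans)
    have "?T x \<le> DF X E x"
    proof (cases "?T x > 0")
      case False then show ?thesis using Df_nonneg[of "SC X" E x] by linarith
    next
      case True
      then have xS: "x \<in> Supp (SC X)" and Tx: "?T x = E x" using Tval by (auto split: if_splits)
      have xE: "fpt_in (x, E x) E" using True Tx fE by (auto simp: fpt_in_def is_fuzzy_set_def)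
      have "DG X E (x, E x)" unfolding D_good_def
      proof (intro conjI allI impI)
        show "fpt_in (x, E x) ?R" using xE True Tx TR by (auto simp: fpt_in_def fsubset_def) (metis)
        fix b assume b: "fpt_in b (OP X) \<and> suff_att \<rho> b (x, E x)"
        have "fpt_in b Ar" using b outp_le[of "SC X"] by (auto simp: fpt_in_def intro: order_trans)
        moreover have "wdefends Ar \<rho> E (x, E x)" using adm xE by (simp add: admissible_def)
        ultimately show "\<exists>c. fpt_in c E \<and> tol_att \<rho> (weaken \<rho> c b) (x, E x)"
          using b unfolding wdefends_def by blast
      qed
      then show ?thesis using good_le_Df Tx by simp
    qed
    then show "?T x \<le> min (DF X E x) (C x)" using TC by simp
  qed
  show ?thesis unfolding AE_def admissible_def using Tfz TR cfT defT TDC by auto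
qed

lemma comp_adm:
  assumes fE: "is_fuzzy_set E" and EA: "fsubset E Ar"
    and comp: "\<forall>X. finter E (SC X) \<in> AE (RR X E) (restr \<rho> (RR X E)) (finter (DF X E) C)"
  shows "admissible Ar \<rho> E \<and> fsubset E C"
proof -
  have Tadm: "\<And>X. admissible (RR X E) (restr \<rho> (RR X E)) (finter E (SC X))"
    and TDC: "\<And>X. fsubset (finter E (SC X)) (finter (DF X E) C)" using comp by (auto simp: AE_def)
  have TR: "\<And>X. fsubset (finter E (SC X)) (RR X E)" using Tadm by (simp add: admissible_def)
  have self: "\<And>x. E x > 0 \<Longrightarrow> x \<in> Supp (SC x)"
  proof -
    fix x assume "E x > 0"
    moreover have "E x \<le> Ar x" using EA by (simp add: fsubset_def)
    ultimately show "x \<in> Supp (SC x)" using pe_refl by (simp add: Supp_SC)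
  qed
  have selfp: "\<And>x v. fpt_in (x,v) E \<Longrightarrow> x \<in> Supp (SC x)"
    using self by (fastforce simp: fpt_in_def)
  have EC: "fsubset E C" unfolding fsubset_def
  proof
    fix x
    have "finter E (SC x) x \<le> C x" using TDC[of x] by (simp add: fsubset_def finter_def)
    moreover have "0 \<le> finter E (SC x) x" by (rule T_nonneg[OF fE EA])
    moreover have "E x > 0 \<Longrightarrow> finter E (SC x) x = E x" using self finter_SC[OF fE EA] by simp
    moreover have "0 \<le> E x" using fE by (simp add: is_fuzzy_set_def)
    ultimately show "E x \<le> C x" by force
  qed
  have restr_eq: "\<And>X x y. x \<in> Supp (RR X E) \<Longrightarrow> y \<in> Supp (RR X E) \<Longrightarrow> restr \<rho> (RR X E) x y = \<rho> x y"
    by (simp add: restr_def)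
  have cf: "conflict_free \<rho> E"
    unfolding conflict_free_def
  proof
    assume "\<exists>p q. fpt_in p E \<and> fpt_in q E \<and> suff_att \<rho> p q"
    then obtain P pv Q qv where pq: "fpt_in (P,pv) E" "fpt_in (Q,qv) E" "suff_att \<rho> (P,pv) (Q,qv)"
      by auto
    have qT: "fpt_in (Q,qv) (finter E (SC Q))" using fpt_T_in[OF fE EA pq(2) selfp[OF pq(2)]] .
    have qR: "fpt_in (Q,qv) (RR Q E)" using fpt_sub[OF qT TR] .
    show False
    proof (cases "P \<in> Supp (SC Q)")
      case True
      have pT: "fpt_in (P,pv) (finter E (SC Q))" using fpt_T_in[OF fE EA pq(1) True] .
      have pR: "fpt_in (P,pv) (RR Q E)" using fpt_sub[OF pT TR] .
      have "suff_att (restr \<rho> (RR Q E)) (P,pv) (Q,qv)"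
        using pq(3) restr_eq[OF fpt_R_Supp[OF pR] fpt_R_Supp[OF qR]] by (simp add: suff_att_def)
      then show False using Tadm[of Q] pT qT unfolding admissible_def conflict_free_def by blast
    next
      case False
      then show False using no_out_suff[OF EA pq(1) False qR] pq(3) by blast
    qed
  qed
  have def: "\<forall>c. fpt_in c E \<longrightarrow> wdefends Ar \<rho> E c"
  proof (intro allI impI)
    fix c assume c: "fpt_in c E"
    obtain A a where cA: "c = (A,a)" by (cases c)
    have cT: "fpt_in (A,a) (finter E (SC A))" using fpt_T_in[OF fE EA _ selfp] c cA by blast
    have TD: "fsubset (finter E (SC A)) (DF A E)"
      using TDC[of A] by (auto simp: fsubset_def finter_def)
    show "wdefends Ar \<rho> E c" unfolding wdefends_def
    proof (intro allI impI)
      fix b assume b: "fpt_in b Ar \<and> suff_att \<rho> b c"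
      obtain B bv where bB: "b = (B,bv)" by (cases b)
      show "\<exists>a'. fpt_in a' E \<and> tol_att \<rho> (weaken \<rho> a' b) c"
        using comp_defends[OF fE EA Tadm[of A] TD _ T_le_E[OF fE EA] cT, of B bv] b bB cA
        by (auto simp: fsubset_def)
    qed
  qed
  show ?thesis using fE EA cf def EC by (simp add: admissible_def)
qed

end

context faf begin

lemma att_iff: "(x,y) \<in> att_rel \<rho> \<longleftrightarrow> \<rho> x y > 0"
  by (simp add: att_rel_def)

lemma max_fwd:
  assumes fE: "is_fuzzy_set E" and EA: "fsubset E Ar" and PEE: "E \<in> PE Ar \<rho> C"
    and TA: "T \<in> AE (RR X E) (restr \<rho> (RR X E)) (finter (DF X E) C)"
    and ET: "fsubset (finter E (SC X)) T"
  shows "T = finter E (SC X)"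
proof -
  have adm: "admissible Ar \<rho> E" and EC: "fsubset E C"
    and maxE: "\<forall>E'\<in>AE Ar \<rho> C. fsubset E E' \<longrightarrow> E' = E" using PEE by (auto simp: PE_def AE_def)
  have Tadm: "admissible (RR X E) (restr \<rho> (RR X E)) T" and TDC: "fsubset T (finter (DF X E) C)"
    using TA by (auto simp: AE_def)
  have TR: "fsubset T (RR X E)" and Tfz: "is_fuzzy_set T" and cfT: "conflict_free (restr \<rho> (RR X E)) T"
    using Tadm by (auto simp: admissible_def)
  have TD: "fsubset T (DF X E)" and TC: "fsubset T C" using TDC by (auto simp: fsubset_def finter_def)
  have cfE: "conflict_free \<rho> E" using adm by (simp add: admissible_def)
  define E2 where "E2 = (\<lambda>x. if x \<in> Supp (SC X) then T x else E x)"
  have Tout: "\<And>x. x \<notin> Supp (SC X) \<Longrightarrow> T x = 0"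
  proof -
    fix x assume "x \<notin> Supp (SC X)"
    then have "RR X E x = 0" by (rule Rf_out)
    moreover have "T x \<le> RR X E x" "0 \<le> T x" using TR Tfz by (auto simp: fsubset_def is_fuzzy_set_def)
    ultimately show "T x = 0" by linarith
  qed
  have EE2: "fsubset E E2" unfolding fsubset_def E2_def
    using ET finter_SC[OF fE EA] by (auto simp: fsubset_def) (metis)
  have TE2: "fsubset T E2" unfolding fsubset_def E2_def using Tout fE by (auto simp: is_fuzzy_set_def)
  have E2fz: "is_fuzzy_set E2" using Tfz fE by (auto simp: E2_def is_fuzzy_set_def)
  have E2Ar: "fsubset E2 Ar" using TR EA Rf_le[of "SC X" E]
    by (auto simp: E2_def fsubset_def intro: order_trans)
  have E2C: "fsubset E2 C" using TC EC by (auto simp: E2_def fsubset_def)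
  have fpt_E2: "\<And>x v. fpt_in (x,v) E2 \<Longrightarrow>
      (x \<in> Supp (SC X) \<and> fpt_in (x,v) T) \<or> (x \<notin> Supp (SC X) \<and> fpt_in (x,v) E)"
    by (auto simp: E2_def fpt_in_def split: if_splits)
  have restr_eq: "\<And>x y. x \<in> Supp (RR X E) \<Longrightarrow> y \<in> Supp (RR X E) \<Longrightarrow> restr \<rho> (RR X E) x y = \<rho> x y"
    by (simp add: restr_def)
  have TSR: "\<And>x v. fpt_in (x,v) T \<Longrightarrow> x \<in> Supp (RR X E)"
    using TR fpt_R_Supp fpt_sub by blast
  have TRp: "\<And>p. fpt_in p T \<Longrightarrow> fpt_in p (RR X E)" using TR fpt_sub by blast
  have noT: "\<And>P pv Q qv. fpt_in (P,pv) T \<Longrightarrow> fpt_in (Q,qv) T \<Longrightarrow> \<not> suff_att \<rho> (P,pv) (Q,qv)"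
  proof
    fix P pv Q qv assume pq: "fpt_in (P,pv) T" "fpt_in (Q,qv) T" "suff_att \<rho> (P,pv) (Q,qv)"
    then have "suff_att (restr \<rho> (RR X E)) (P,pv) (Q,qv)"
      using restr_eq[OF TSR TSR] by (simp add: suff_att_def)
    then show False using cfT pq unfolding conflict_free_def by blast
  qed
  have cf2: "conflict_free \<rho> E2"
    unfolding conflict_free_def
  proof
    assume "\<exists>p q. fpt_in p E2 \<and> fpt_in q E2 \<and> suff_att \<rho> p q"
    then obtain P pv Q qv where pq: "fpt_in (P,pv) E2" "fpt_in (Q,qv) E2" "suff_att \<rho> (P,pv) (Q,qv)"
      by auto
    consider "fpt_in (P,pv) T" "fpt_in (Q,qv) T"
      | "fpt_in (P,pv) E" "fpt_in (Q,qv) E"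
      | "fpt_in (P,pv) E" "P \<notin> Supp (SC X)" "fpt_in (Q,qv) T"
      | "fpt_in (P,pv) T" "fpt_in (Q,qv) E" "Q \<notin> Supp (SC X)"
      using fpt_E2[OF pq(1)] fpt_E2[OF pq(2)] by blast
    then show False
    proof cases
      case 1 then show False using noT pq(3) by blast
    next
      case 2 then show False using cfE pq(3) unfolding conflict_free_def by blast
    next
      case 3 then show False using no_out_suff[OF EA 3(1) 3(2) TRp[OF 3(3)]] pq(3) by blast
    next
      case 4
      have pAr: "fpt_in (P,pv) Ar" using 4(1) TR Rf_le[of "SC X" E P]
        unfolding fpt_in_def fsubset_def by (metis fst_conv snd_conv order_trans)
      have "wdefends Ar \<rho> E (Q,qv)" using adm 4(2) by (simp add: admissible_def)
      then obtain a' where a': "fpt_in a' E" "tol_att \<rho> (weaken \<rho> a' (P,pv)) (Q,qv)"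
        using pAr pq(3) unfolding wdefends_def by blast
      obtain A' av where aA: "a' = (A',av)" by (cases a')
      have t: "min (min (1 - min av (\<rho> A' P)) pv) (\<rho> P Q) + qv \<le> 1"
        using a'(2) aA by (simp add: tol_att_def weaken_def)
      have s: "min pv (\<rho> P Q) + qv > 1" using pq(3) by (simp add: suff_att_def)
      have qv: "0 < qv" using 4(2) by (simp add: fpt_in_def)
      have "1 - min av (\<rho> A' P) + qv \<le> 1" using t s by (auto simp: min_def split: if_splits)
      then have "min av (\<rho> A' P) + pv > 1" "\<rho> A' P > 0" using s qv by (auto simp: min_def split: if_splits)
      then have sa: "suff_att \<rho> (A',av) (P,pv)" by (simp add: suff_att_def)
      show False
      proof (cases "A' \<in> Supp (SC X)")
        case True
        have "fpt_in (A',av) T" using fpt_sub[OF fpt_T_in[OF fE EA _ True] ET] a' aA by blast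
        then show False using noT[OF _ 4(1)] sa by blast
      next
        case False
        then show False using no_out_suff[OF EA _ False TRp[OF 4(1)]] a' aA sa by blast
      qed
    qed
  qed
  have def2: "\<forall>c. fpt_in c E2 \<longrightarrow> wdefends Ar \<rho> E2 c"
  proof (intro allI impI)
    fix c assume c: "fpt_in c E2"
    obtain A a where cA: "c = (A,a)" by (cases c)
    show "wdefends Ar \<rho> E2 c" unfolding wdefends_def
    proof (intro allI impI)
      fix b assume b: "fpt_in b Ar \<and> suff_att \<rho> b c"
      obtain B bv where bB: "b = (B,bv)" by (cases b)
      consider "fpt_in (A,a) T" | "fpt_in (A,a) E" using fpt_E2 c cA by blast
      then show "\<exists>a'. fpt_in a' E2 \<and> tol_att \<rho> (weaken \<rho> a' b) c"
      proof cases
        case 1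
        then show ?thesis using comp_defends[OF fE EA Tadm TD EE2 TE2 1, of B bv] b bB cA by simp
      next
        case 2
        have "wdefends Ar \<rho> E (A,a)" using adm 2 by (simp add: admissible_def)
        then obtain a' where "fpt_in a' E" "tol_att \<rho> (weaken \<rho> a' b) c"
          using b cA unfolding wdefends_def by blast
        then show ?thesis using fpt_sub[OF _ EE2] by blast
      qed
    qed
  qed
  have "E2 \<in> AE Ar \<rho> C" unfolding AE_def admissible_def using E2fz E2Ar cf2 def2 E2C by simp
  then have E2E: "E2 = E" using maxE EE2 by blast
  show "T = finter E (SC X)"
  proof
    fix x
    show "T x = finter E (SC X) x"
    proof (cases "x \<in> Supp (SC X)")
      case True
      then have "T x = E2 x" by (simp add: E2_def)
      then show ?thesis using E2E True finter_SC[OF fE EA] by simp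
    next
      case False
      then show ?thesis using Tout finter_SC[OF fE EA] by simp
    qed
  qed
qed

end

context faf begin

lemma pe_cases: "path_equiv \<rho> A X \<Longrightarrow> (A,X) \<in> (att_rel \<rho>)\<^sup>*"
  by (auto simp: path_equiv_def)

lemma max_bwd:
  assumes fE: "is_fuzzy_set E" and EA: "fsubset E Ar"
    and comp: "\<forall>X. finter E (SC X) \<in> PE (RR X E) (restr \<rho> (RR X E)) (finter (DF X E) C)"
    and E'A: "E' \<in> AE Ar \<rho> C" and EE': "fsubset E E'"
  shows "E' = E"
proof (rule ccontr)
  assume ne: "E' \<noteq> E"
  have adm': "admissible Ar \<rho> E'" and E'C: "fsubset E' C" using E'A by (auto simp: AE_def)
  have fE': "is_fuzzy_set E'" and E'Ar: "fsubset E' Ar" using adm' by (auto simp: admissible_def)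
  define anc where "anc x = {y. (y,x) \<in> (att_rel \<rho>)\<^sup>*}" for x
  obtain X0 where "E' X0 \<noteq> E X0" using ne by auto
  then obtain X where XD: "E' X \<noteq> E X" and Xmin: "\<And>y. E' y \<noteq> E y \<Longrightarrow> card (anc X) \<le> card (anc y)"
    using ex_has_least_nat[of "\<lambda>x. E' x \<noteq> E x" X0 "\<lambda>x. card (anc x)"] by blast
  have minimal: "\<And>Y. (Y,X) \<in> (att_rel \<rho>)\<^sup>+ \<Longrightarrow> \<not> path_equiv \<rho> Y X \<Longrightarrow> E' Y = E Y"
  proof (rule ccontr)
    fix Y assume YX: "(Y,X) \<in> (att_rel \<rho>)\<^sup>+" and npe: "\<not> path_equiv \<rho> Y X" and nY: "E' Y \<noteq> E Y"
    have sub: "anc Y \<subseteq> anc X" unfolding anc_def using YX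
      by (auto intro: rtrancl_trans trancl_into_rtrancl)
    have "X \<in> anc X" by (simp add: anc_def)
    moreover have "X \<notin> anc Y"
    proof
      assume "X \<in> anc Y"
      then have "(X,Y) \<in> (att_rel \<rho>)\<^sup>*" by (simp add: anc_def)
      then have "X = Y \<or> (X,Y) \<in> (att_rel \<rho>)\<^sup>+" by (auto simp: rtrancl_eq_or_trancl)
      then show False using npe YX pe_refl by (auto simp: path_equiv_def)
    qed
    ultimately have "anc Y \<subset> anc X" using sub by blast
    then have "card (anc Y) < card (anc X)" using fin by (meson psubset_card_mono finite_subset subset_UNIV)
    then show False using Xmin[OF nY] by linarith
  qed
  have Ege: "\<And>x. E x \<le> E' x" using EE' by (simp add: fsubset_def)
  have E0: "\<And>x. 0 \<le> E x" using fE by (simp add: is_fuzzy_set_def)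
  have E'le: "\<And>x. E' x \<le> Ar x" using E'Ar by (simp add: fsubset_def)
  have opeq: "\<And>B. OP X B \<noteq> 0 \<Longrightarrow> E' B = E B"
  proof -
    fix B assume "OP X B \<noteq> 0"
    then have Bn: "B \<notin> Supp (SC X)" and ex: "\<exists>A\<in>Supp (SC X). \<rho> B A > 0" and OB: "OP X B = Ar B"
      by (auto simp: outparents_def split: if_splits)
    show "E' B = E B"
    proof (cases "Ar B > 0")
      case False
      then show ?thesis using Ege[of B] E0[of B] E'le[of B] by linarith
    next
      case True
      then have npe: "\<not> path_equiv \<rho> B X" using Bn by (simp add: Supp_SC)
      obtain A where A: "A \<in> Supp (SC X)" "\<rho> B A > 0" using ex by blast
      have "(A,X) \<in> (att_rel \<rho>)\<^sup>*" using A(1) pe_cases by (simp add: Supp_SC)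
      moreover have "(B,A) \<in> att_rel \<rho>" using A(2) by (simp add: att_iff)
      ultimately have "(B,X) \<in> (att_rel \<rho>)\<^sup>+" by (meson rtrancl_into_trancl2)
      then show ?thesis using minimal npe by blast
    qed
  qed
  have fo: "finter E' (OP X) = finter E (OP X)"
  proof
    fix B
    show "finter E' (OP X) B = finter E (OP X) B"
    proof (cases "OP X B = 0")
      case True
      then show ?thesis using E0[of B] Ege[of B] by (simp add: finter_def)
    next
      case False
      then show ?thesis using opeq by (simp add: finter_def)
    qed
  qed
  have Leq: "LL X E' = LL X E" unfolding Lf_def fo ..
  have Req: "RR X E' = RR X E" unfolding Rf_def Leq ..
  have DGeq: "\<And>p. DG X E' p = DG X E p"
  proof
    fix p assume g: "DG X E p"
    show "DG X E' p" unfolding D_good_def Req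
    proof (intro conjI allI impI)
      show "fpt_in p (RR X E)" using g by (simp add: D_good_def)
      fix b assume b: "fpt_in b (OP X) \<and> suff_att \<rho> b p"
      then obtain c where "fpt_in c E" "tol_att \<rho> (weaken \<rho> c b) p" using g unfolding D_good_def by blast
      then show "\<exists>c. fpt_in c E' \<and> tol_att \<rho> (weaken \<rho> c b) p" using fpt_sub[OF _ EE'] by blast
    qed
  next
    fix p assume g: "DG X E' p"
    obtain A a where pA: "p = (A,a)" by (cases p)
    have pR: "fpt_in (A,a) (RR X E)" using g pA Req by (simp add: D_good_def)
    have AS: "A \<in> Supp (SC X)" using pR Rf_pos[of "SC X" E A] by (auto simp: fpt_in_def)
    have a0: "0 < a" using pR by (simp add: fpt_in_def)
    show "DG X E p" unfolding D_good_def
    proof (intro conjI allI impI)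
      show "fpt_in p (RR X E)" using pR pA by simp
      fix b assume b: "fpt_in b (OP X) \<and> suff_att \<rho> b p"
      obtain B bv where bB: "b = (B,bv)" by (cases b)
      obtain c where c: "fpt_in c E'" "tol_att \<rho> (weaken \<rho> c b) p" using g b unfolding D_good_def by blast
      obtain C' cv where cC: "c = (C',cv)" by (cases c)
      have t: "min (min (1 - min cv (\<rho> C' B)) bv) (\<rho> B A) + a \<le> 1"
        using c(2) cC bB pA by (simp add: tol_att_def weaken_def)
      have s: "min bv (\<rho> B A) + a > 1" "\<rho> B A > 0" using b bB pA by (auto simp: suff_att_def)
      have "1 - min cv (\<rho> C' B) + a \<le> 1" using t s by (auto simp: min_def split: if_splits)
      then have rC: "\<rho> C' B > 0" using a0 by (auto simp: min_def split: if_splits)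
      have "OP X B > 0" using b bB by (auto simp: fpt_in_def)
      then have Bn: "B \<notin> Supp (SC X)" and OB: "OP X B = Ar B"
        by (auto simp: outparents_def split: if_splits)
      have ArB: "Ar B > 0" using OB \<open>OP X B > 0\<close> by simp
      have AX: "(A,X) \<in> (att_rel \<rho>)\<^sup>*" using AS pe_cases by (simp add: Supp_SC)
      have BX: "(B,X) \<in> (att_rel \<rho>)\<^sup>+" using AX s(2) by (meson att_iff rtrancl_into_trancl2)
      have CX: "(C',X) \<in> (att_rel \<rho>)\<^sup>+" using BX rC by (meson att_iff trancl_into_trancl2)
      have npe: "\<not> path_equiv \<rho> C' X"
      proof
        assume pe: "path_equiv \<rho> C' X"
        have "(X,C') \<in> (att_rel \<rho>)\<^sup>*" using pe_cases[OF pe_sym[OF pe]] .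
        then have "(X,B) \<in> (att_rel \<rho>)\<^sup>+" using rC by (meson att_iff rtrancl_into_trancl1)
        then have "path_equiv \<rho> B X" using BX by (simp add: path_equiv_def)
        then show False using Bn ArB by (simp add: Supp_SC)
      qed
      have "E' C' = E C'" using minimal[OF CX npe] .
      then have "fpt_in c E" using c(1) cC by (simp add: fpt_in_def)
      then show "\<exists>c. fpt_in c E \<and> tol_att \<rho> (weaken \<rho> c b) p" using c(2) by blast
    qed
  qed
  have DGfeq: "D_good Ar \<rho> (SC X) E' = D_good Ar \<rho> (SC X) E" using DGeq by (rule ext)
  have Dfeq: "DF X E' = DF X E" unfolding Df_def DGfeq ..
  have "finter E' (SC X) \<in> AE (RR X E') (restr \<rho> (RR X E')) (finter (DF X E') C)"
    by (rule adm_comp[OF fE' E'Ar adm' E'C])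
  then have T'A: "finter E' (SC X) \<in> AE (RR X E) (restr \<rho> (RR X E)) (finter (DF X E) C)"
    unfolding Req Dfeq .
  have sub: "fsubset (finter E (SC X)) (finter E' (SC X))"
    using finter_SC[OF fE EA] finter_SC[OF fE' E'Ar] Ege by (simp add: fsubset_def)
  have "finter E' (SC X) = finter E (SC X)" using comp T'A sub unfolding PE_def by blast
  moreover have "X \<in> Supp (SC X)"
  proof -
    have "E' X > 0" using XD Ege[of X] E0[of X] by linarith
    then have "Ar X > 0" using E'le[of X] by linarith
    then show ?thesis using pe_refl by (simp add: Supp_SC)
  qed
  ultimately have "E' X = E X" using finter_SC[OF fE EA] finter_SC[OF fE' E'Ar] by (metis)
  then show False using XD by simp
qed

theorem main:
  assumes fE: "is_fuzzy_set E" and EA: "fsubset E Ar"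
  shows "E \<in> PE Ar \<rho> C \<longleftrightarrow>
     (\<forall>S \<in> SCCS Ar \<rho>. finter E S \<in> PE (Rf Ar \<rho> S E) (restr \<rho> (Rf Ar \<rho> S E)) (finter (Df Ar \<rho> S E) C))"
proof -
  have "(\<forall>S \<in> SCCS Ar \<rho>. finter E S \<in> PE (Rf Ar \<rho> S E) (restr \<rho> (Rf Ar \<rho> S E)) (finter (Df Ar \<rho> S E) C))
    \<longleftrightarrow> (\<forall>X. finter E (SC X) \<in> PE (RR X E) (restr \<rho> (RR X E)) (finter (DF X E) C))"
    by (simp add: SCCS_def)
  moreover have "E \<in> PE Ar \<rho> C \<longleftrightarrow> (\<forall>X. finter E (SC X) \<in> PE (RR X E) (restr \<rho> (RR X E)) (finter (DF X E) C))"
  proof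
    assume P: "E \<in> PE Ar \<rho> C"
    have adm: "admissible Ar \<rho> E" and EC: "fsubset E C" using P by (auto simp: PE_def AE_def)
    show "\<forall>X. finter E (SC X) \<in> PE (RR X E) (restr \<rho> (RR X E)) (finter (DF X E) C)"
    proof
      fix X
      have "finter E (SC X) \<in> AE (RR X E) (restr \<rho> (RR X E)) (finter (DF X E) C)"
        by (rule adm_comp[OF fE EA adm EC])
      moreover have "\<forall>T \<in> AE (RR X E) (restr \<rho> (RR X E)) (finter (DF X E) C).
          fsubset (finter E (SC X)) T \<longrightarrow> T = finter E (SC X)"
        using max_fwd[OF fE EA P] by blast
      ultimately show "finter E (SC X) \<in> PE (RR X E) (restr \<rho> (RR X E)) (finter (DF X E) C)"
        unfolding PE_def by blast
    qed
  next
    assume comp: "\<forall>X. finter E (SC X) \<in> PE (RR X E) (restr \<rho> (RR X E)) (finter (DF X E) C)"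
    then have "\<forall>X. finter E (SC X) \<in> AE (RR X E) (restr \<rho> (RR X E)) (finter (DF X E) C)"
      by (simp add: PE_def)
    then have "admissible Ar \<rho> E \<and> fsubset E C" using comp_adm[OF fE EA] by blast
    then have "E \<in> AE Ar \<rho> C" by (simp add: AE_def)
    then show "E \<in> PE Ar \<rho> C" unfolding PE_def using max_bwd[OF fE EA comp] by blast
  qed
  ultimately show ?thesis by simp
qed

end

theorem mainTheorem6:
  fixes Ar :: "'a fset" and \<rho> :: "'a attrel" and E :: "'a fset"
  assumes "finite (UNIV :: 'a set)"
    and "is_FAF Ar \<rho>"
    and "is_fuzzy_set E" and "fsubset E Ar"
  shows "\<forall>C. is_fuzzy_set C \<and> fsubset C Ar \<longrightarrow>
           (E \<in> PE Ar \<rho> C \<longleftrightarrow>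
              (\<forall>S \<in> SCCS Ar \<rho>.
                 finter E S \<in> PE (Rf Ar \<rho> S E) (restr \<rho> (Rf Ar \<rho> S E))
                                  (finter (Df Ar \<rho> S E) C)))"
proof -
  interpret faf Ar \<rho> using assms(1,2) by unfold_locales
  show ?thesis using main[OF assms(3,4)] by blast
qed


end
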